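(* Let $q$ be an odd prime, let $g$ be a primitive root modulo $q$, let $\omega=e^{2\pi i/(q-1)}$, and let $\chi_g$ be the Dirichlet character modulo $q$ with $\chi_g(n)=\omega^{\mathrm{ind}_g(n)}$ if $q\nmid n$ and $\chi_g(n)=0$ otherwise, where $\mathrm{ind}_g(n)$ is defined modulo $q-1$ by $n\equiv g^{\mathrm{ind}_g(n)}\pmod q$. For $1\le r\le q-2$ put $$C(q,r,\chi_g)=\prod_{p:\ \chi_g(p)=\omega^r}\Big(1-\frac{1}{p^{(q-1)/(r,q-1)}}\Big),$$ the product over all primes $p$ with $\chi_g(p)=\omega^r$, where $(r,q-1)$ denotes the greatest common divisor, and define $$C(q)=\prod_{r=1}^{q-2}C(q,r,\chi_g)^{(r,q-1)}.$$ For a prime $p\ne q$ let $f_p$ be the smallest integer $k\ge 1$ with $p^k\equiv 1\pmod q$. Then $$C(q)=\prod_{p\neq q,\ f_p\ge 2}\Big(1-\frac{1}{p^{f_p}}\Big)^{\frac{q-1}{f_p}}.$$ *)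

theory Defs
  imports "HOL-Analysis.Analysis" "HOL-Number_Theory.Number_Theory"
begin

text \<open>Index (discrete logarithm) of n to base g modulo q: the least k with n = g^k mod q
  (ind is only defined modulo q-1; omega^ind does not depend on the representative).\<close>
definition ind_g :: "nat \<Rightarrow> nat \<Rightarrow> nat \<Rightarrow> nat" where
  "ind_g q g n = (LEAST k. [g ^ k = n] (mod q))"

definition omega_q :: "nat \<Rightarrow> complex" where
  "omega_q q = exp (2 * of_real pi * \<i> / of_nat (q - 1))"

definition chi_g :: "nat \<Rightarrow> nat \<Rightarrow> nat \<Rightarrow> complex" where
  "chi_g q g n = (if q dvd n then 0 else omega_q q ^ ind_g q g n)"

definition C_qr :: "nat \<Rightarrow> nat \<Rightarrow> nat \<Rightarrow> real" where
  "C_qr q g r = (\<Prod>p. if prime p \<and> chi_g q g p = omega_q q ^ r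
                       then 1 - 1 / real p ^ ((q - 1) div gcd r (q - 1)) else 1)"

definition C_q :: "nat \<Rightarrow> nat \<Rightarrow> real" where
  "C_q q g = (\<Prod>r = 1..q - 2. C_qr q g r ^ gcd r (q - 1))"

end

theory Submission
  imports Defs
begin

lemma omega_pow: "omega_q q ^ k = exp (2 * of_real pi * \<i> * of_nat k / of_nat (q - 1))"
  unfolding omega_q_def by (simp add: exp_of_nat_mult[symmetric] algebra_simps)

lemma omega_nz: "omega_q q \<noteq> 0"
  unfolding omega_q_def by simp

lemma omega_inj_aux:
  assumes "q \<ge> 2" "a \<le> b" "b < q - 1" "omega_q q ^ a = omega_q q ^ b"
  shows "a = b"
proof -
  have "omega_q q ^ b = omega_q q ^ a * omega_q q ^ (b - a)"
    using assms(2) by (simp add: power_add[symmetric])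
  with assms(4) omega_nz[of q] have "omega_q q ^ (b - a) = 1" by simp
  hence "(q - 1) dvd (b - a)"
    using complex_root_unity_eq_1[of "q - 1" "b - a"] assms(1) by (simp add: omega_pow)
  moreover have "b - a < q - 1" using assms by simp
  ultimately show ?thesis using assms(2) by (metis diff_is_0_eq dvd_imp_le le_antisym not_le zero_less_diff)
qed

lemma omega_inj:
  assumes "q \<ge> 2" "a < q - 1" "b < q - 1" "omega_q q ^ a = omega_q q ^ b"
  shows "a = b"
  using omega_inj_aux[of q a b] omega_inj_aux[of q b a] assms by (cases "a \<le> b") auto

lemma ind_props:
  assumes q: "prime q" and g: "residue_primroot q g" and p: "prime p" "p \<noteq> q"
  shows "ind_g q g p < q - 1" "[g ^ ind_g q g p = p] (mod q)"
proof -
  have q1: "q > 1" using q prime_gt_1_nat by blast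
  have cop: "coprime q p" using p q by (simp add: primes_coprime)
  have "p mod q \<in> totatives q"
  proof -
    have "p mod q \<noteq> 0" using cop q1
      by (metis cop coprime_commute mod_0_imp_dvd not_prime_unit p(1) prime_nat_iff q coprime_absorb_left p(2) dvd_def)
    thus ?thesis using cop q1 by (auto simp: totatives_def coprime_commute)
  qed
  moreover have "bij_betw (\<lambda>i. g ^ i mod q) {..<totient q} (totatives q)"
    by (rule residue_primroot_is_generator[OF q1 g])
  ultimately have "p mod q \<in> (\<lambda>i. g ^ i mod q) ` {..<q - 1}"
    using q by (simp add: bij_betw_def totient_prime)
  then obtain i where i0: "i \<in> {..<q - 1}" and i2: "p mod q = g ^ i mod q"
    by (rule imageE)
  have i: "i < q - 1" using i0 by simp
  have ex: "[g ^ i = p] (mod q)" using i2 by (simp add: cong_def)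
  have "ind_g q g p \<le> i" unfolding ind_g_def by (rule Least_le) (rule ex)
  thus "ind_g q g p < q - 1" using i by simp
  show "[g ^ ind_g q g p = p] (mod q)" unfolding ind_g_def by (rule LeastI) (rule ex)
qed

lemma ord_p:
  assumes q: "prime q" and g: "residue_primroot q g" and p: "prime p" "p \<noteq> q"
  shows "ord q p = (q - 1) div gcd (ind_g q g p) (q - 1)"
proof -
  have "ord q p = ord q (g ^ ind_g q g p)"
    using ind_props(2)[OF q g p] by (metis ord_cong cong_sym)
  also have "\<dots> = ord q g div gcd (ind_g q g p) (ord q g)"
    using g by (intro ord_power) (simp add: residue_primroot_def)
  also have "ord q g = q - 1" using g q by (simp add: residue_primroot_def totient_prime)
  finally show ?thesis .
qed

lemma e_ge2:
  assumes "1 \<le> r" "r < (n::nat)"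
  shows "2 \<le> n div gcd r n"
proof (rule ccontr)
  assume "\<not> 2 \<le> n div gcd r n"
  hence "n div gcd r n \<le> 1" by simp
  moreover have "n div gcd r n * gcd r n = n" by simp
  ultimately have "n \<le> gcd r n" by (metis mult_le_mono1 mult_1)
  moreover have "gcd r n \<le> r" using assms by (simp add: gcd_le1_nat)
  ultimately show False using assms by simp
qed

theorem proposition1:
  fixes q g :: nat
  assumes "prime q" and "odd q" and "residue_primroot q g"
  shows "C_q q g =
    (\<Prod>p. if prime p \<and> p \<noteq> q \<and> ord q p \<ge> 2
           then (1 - 1 / real p ^ ord q p) ^ ((q - 1) div ord q p) else 1)"
proof -
  note q = assms(1) and g = assms(3)
  have q2: "q \<ge> 2" using q prime_ge_2_nat by blast
  define e where "e r = (q - 1) div gcd r (q - 1)" for r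
  define a where "a r p = (if prime p \<and> chi_g q g p = omega_q q ^ r
                       then 1 - 1 / real p ^ e r else 1)" for r p
  have e2: "e r \<ge> 2" if "r \<in> {1..q-2}" for r
    unfolding e_def using that q2 by (intro e_ge2) auto
  have has: "a r has_prod C_qr q g r" if r: "r \<in> {1..q-2}" for r
  proof -
    have bound: "norm (norm (a r p - 1)) \<le> inverse (real p ^ 2)" for p
    proof (cases "prime p \<and> chi_g q g p = omega_q q ^ r")
      case True
      hence p1: "real p \<ge> 1" using prime_ge_1_nat by auto
      have "real p ^ 2 \<le> real p ^ e r" using e2[OF r] p1 by (intro power_increasing) auto
      hence "1 / real p ^ e r \<le> 1 / real p ^ 2"
        using p1 by (intro divide_left_mono) auto
      moreover have "1 / real p ^ e r \<ge> 0" by simp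
      ultimately show ?thesis using True by (simp add: a_def divide_inverse)
    next
      case False
      have "a r p = 1" unfolding a_def by (rule if_not_P[OF False])
      thus ?thesis by simp
    qed
    have "summable (\<lambda>p. norm (a r p - 1))"
      by (rule summable_comparison_test[OF _ inverse_power_summable[of 2]])
         (use bound in auto)
    hence "convergent_prod (a r)"
      by (intro abs_convergent_prod_imp_convergent_prod summable_imp_abs_convergent_prod)
    hence "a r has_prod prodinf (a r)" by (rule convergent_prod_has_prod)
    moreover have "prodinf (a r) = C_qr q g r"
      unfolding C_qr_def a_def e_def ..
    ultimately show ?thesis by simp
  qed
  have H: "(\<lambda>p. \<Prod>r\<in>{1..q-2}. a r p ^ gcd r (q - 1)) has_prod C_q q g"
    unfolding C_q_def by (intro has_prod_prod has_prod_power has)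
  have pw: "(\<Prod>r\<in>{1..q-2}. a r p ^ gcd r (q - 1)) =
    (if prime p \<and> p \<noteq> q \<and> ord q p \<ge> 2
           then (1 - 1 / real p ^ ord q p) ^ ((q - 1) div ord q p) else 1)" for p
  proof (cases "prime p \<and> p \<noteq> q")
    case False
    have "a r p = 1" for r
    proof (cases "p = q")
      case True
      hence "chi_g q g p = 0" by (simp add: chi_g_def)
      thus ?thesis using omega_nz[of q] by (auto simp: a_def)
    qed (use False in \<open>auto simp: a_def\<close>)
    hence L: "(\<Prod>r\<in>{1..q-2}. a r p ^ gcd r (q - 1)) = 1" by simp
    have "\<not> (prime p \<and> p \<noteq> q \<and> ord q p \<ge> 2)" using False by blast
    thus ?thesis unfolding L by (rule if_not_P[symmetric])
  next
    case True
    hence p: "prime p" "p \<noteq> q" by auto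
    define i where "i = ind_g q g p"
    have i: "i < q - 1" using ind_props(1)[OF q g p] by (simp add: i_def)
    have chi: "chi_g q g p = omega_q q ^ i"
    proof -
      have "\<not> q dvd p" using p q by (metis prime_nat_iff primes_dvd_imp_eq)
      thus ?thesis by (simp add: chi_g_def i_def)
    qed
    have ordp: "ord q p = (q - 1) div gcd i (q - 1)" using ord_p[OF q g p] by (simp add: i_def)
    have ar: "a r p = (if r = i then 1 - 1 / real p ^ e r else 1)" if "r \<in> {1..q-2}" for r
      using that omega_inj[OF q2 _ i, of r] chi p(1) i by (auto simp: a_def)
    have "(\<Prod>r\<in>{1..q-2}. a r p ^ gcd r (q - 1))
        = (\<Prod>r\<in>{1..q-2}. if r = i then (1 - 1 / real p ^ e r) ^ gcd r (q - 1) else 1)"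
      by (intro prod.cong refl) (simp add: ar)
    also have "\<dots> = (if i \<in> {1..q-2} then (1 - 1 / real p ^ e i) ^ gcd i (q - 1) else 1)"
      by simp
    also have "\<dots> = (if prime p \<and> p \<noteq> q \<and> ord q p \<ge> 2
           then (1 - 1 / real p ^ ord q p) ^ ((q - 1) div ord q p) else 1)"
    proof (cases "i = 0")
      case True
      hence "ord q p = 1" using ordp q2 by simp
      thus ?thesis using True by simp
    next
      case False
      hence iin: "i \<in> {1..q-2}" using i by auto
      have "ord q p = e i" using ordp by (simp add: e_def)
      moreover have "(q - 1) div e i = gcd i (q - 1)"
        unfolding e_def using q2 by (simp add: div_div_eq_right)
      ultimately show ?thesis using iin e2[OF iin] p by simp
    qed
    finally show ?thesis .
  qed
  from H have "(\<lambda>p. if prime p \<and> p \<noteq> q \<and> ord q p \<ge> 2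
           then (1 - 1 / real p ^ ord q p) ^ ((q - 1) div ord q p) else 1) has_prod C_q q g"
    by (simp only: pw)
  thus ?thesis by (rule has_prod_unique)
qed

end
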